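(* There exists $c\in(0,1)$ such that for all $m,n,k\in\mathbb N$, $$\P\big(\tau^{(m)}_k\le n\big)\le\Big(\frac{n(\log m+1)}{c\,k\,m}\wedge1\Big)^{\frac{ck}{\log m+1}}.$$ Equivalently, for all $m\in\mathbb N$ and $s,t\in(0,\infty)$, $\P\big(\tau^{(m)}_{\lfloor s(\log m+1)\rfloor}\le tm\big)\le e^{-cs\log^+(\frac{cs}{t})}$.
   Context: Positive reals $r(n)=\frac an(1+o(1))$, $a\in(0,\infty)$, $R_m=\sum_{n\le m}r(n)$; $(T^{(m)}_i)$ i.i.d. with $\P(T^{(m)}_i=n)=\frac{r(n)}{R_m}\mathbf1_{\{1,\dots,m\}}(n)$; $\tau^{(m)}_k=\sum_{i\le k}T^{(m)}_i$. $\log^+x=\max(\log x,0)$. *)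

theory Defs
  imports "HOL-Probability.Probability"
begin

definition R :: "(nat \<Rightarrow> real) \<Rightarrow> nat \<Rightarrow> real" where
  "R r m = (\<Sum>n=1..m. r n)"

definition T_pmf :: "(nat \<Rightarrow> real) \<Rightarrow> nat \<Rightarrow> nat pmf" where
  "T_pmf r m = embed_pmf (\<lambda>n. if n \<in> {1..m} then r n / R r m else 0)"

definition tau_pmf :: "(nat \<Rightarrow> real) \<Rightarrow> nat \<Rightarrow> nat \<Rightarrow> nat pmf" where
  "tau_pmf r m k = map_pmf (\<lambda>T. \<Sum>i<k. T i) (Pi_pmf {..<k} 0 (\<lambda>_. T_pmf r m))"

end

theory Submission
  imports Defs
begin

lemma harm_up: "m \<ge> 1 \<Longrightarrow> (\<Sum>j=1..m. 1 / real j) \<le> ln (real m) + 1"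
proof (induction m rule: nat_induct_at_least)
  case base then show ?case by simp
next
  case (Suc m)
  have m: "real m > 0" using Suc by simp
  have "ln (real m / (real m + 1)) \<le> real m / (real m + 1) - 1"
    by (rule ln_le_minus_one) (use m in simp)
  also have "\<dots> = - 1 / (real m + 1)" using m by (simp add: field_simps)
  finally have "1 / (real m + 1) \<le> ln (real m + 1) - ln (real m)"
    using m by (simp add: ln_div)
  moreover have "(\<Sum>j=1..Suc m. 1 / real j) = (\<Sum>j=1..m. 1 / real j) + 1 / (real m + 1)"
    by simp
  ultimately show ?case using Suc.IH by (simp add: add.commute)
qed

lemma harm_low: "ln ((real m + 1) / (real J + 1)) \<le> (\<Sum>j=Suc J..m. 1 / real j)"
proof (induction m)
  case 0 then show ?case by simp
next
  case (Suc m)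
  show ?case
  proof (cases "Suc m \<le> J")
    case True
    then have "ln ((real (Suc m) + 1) / (real J + 1)) \<le> 0" by simp
    moreover have "0 \<le> (\<Sum>j=Suc J..Suc m. 1 / real j)" by (intro sum_nonneg) simp
    ultimately show ?thesis by linarith
  next
    case False
    then have eq: "(\<Sum>j=Suc J..Suc m. 1 / real j) = (\<Sum>j=Suc J..m. 1 / real j) + 1 / real (Suc m)"
      using False by (subst sum.cl_ivl_Suc) simp
    have "ln ((real m + 2) / (real m + 1)) \<le> (real m + 2) / (real m + 1) - 1"
      by (rule ln_le_minus_one) simp
    also have "\<dots> = 1 / (real m + 1)" by (simp add: field_simps)
    finally have "ln ((real m + 2) / (real J + 1)) - ln ((real m + 1) / (real J + 1)) \<le> 1 / (real m + 1)"
      by (simp add: ln_div)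
    then show ?thesis using Suc eq by (simp add: add.commute)
  qed
qed

context
  fixes r :: "nat \<Rightarrow> real" and m :: nat
  assumes r_pos: "\<And>n. n \<ge> 1 \<Longrightarrow> 0 < r n" and m1: "m \<ge> 1"
begin

lemma R_pos: "R r m > 0"
  unfolding R_def using m1 r_pos by (intro sum_pos) auto

lemma pmf_T: "pmf (T_pmf r m) j = (if j \<in> {1..m} then r j / R r m else 0)"
  unfolding T_pmf_def
proof (rule pmf_embed_pmf)
  show "0 \<le> (if x \<in> {1..m} then r x / R r m else 0)" for x
    using r_pos[of x] R_pos by auto
  have "(\<integral>\<^sup>+ x. ennreal (if x \<in> {1..m} then r x / R r m else 0) \<partial>count_space UNIV)
      = (\<Sum>x\<in>{1..m}. ennreal (if x \<in> {1..m} then r x / R r m else 0))"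
    by (rule nn_integral_count_space') auto
  also have "\<dots> = ennreal (\<Sum>x\<in>{1..m}. r x / R r m)"
    using r_pos R_pos by (subst sum_ennreal) (auto intro!: divide_nonneg_pos less_imp_le)
  also have "(\<Sum>x\<in>{1..m}. r x / R r m) = 1"
    using R_pos by (simp add: sum_divide_distrib[symmetric] R_def)
  finally show "(\<integral>\<^sup>+ x. ennreal (if x \<in> {1..m} then r x / R r m else 0) \<partial>count_space UNIV) = 1"
    by simp
qed

lemma set_T: "set_pmf (T_pmf r m) \<subseteq> {1..m}"
  by (auto simp: set_pmf_eq pmf_T split: if_splits)

lemma exp_T: "measure_pmf.expectation (T_pmf r m) f = (\<Sum>j=1..m. f j * r j) / R r m"
proof -
  have "measure_pmf.expectation (T_pmf r m) f = (\<Sum>j\<in>{1..m}. f j * pmf (T_pmf r m) j)"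
    by (rule integral_measure_pmf_real) (use set_T in auto)
  also have "\<dots> = (\<Sum>j=1..m. f j * r j) / R r m"
    by (simp add: pmf_T sum_divide_distrib)
  finally show ?thesis .
qed

lemma exp_tau: "measure_pmf.expectation (tau_pmf r m k) (\<lambda>s. exp (- l * real s))
   = (measure_pmf.expectation (T_pmf r m) (\<lambda>j. exp (- l * real j))) ^ k"
proof -
  have "measure_pmf.expectation (tau_pmf r m k) (\<lambda>s. exp (- l * real s))
     = measure_pmf.expectation (Pi_pmf {..<k} 0 (\<lambda>_. T_pmf r m))
         (\<lambda>T. \<Prod>i\<in>{..<k}. exp (- l * real (T i)))"
    unfolding tau_pmf_def
    by (simp add: exp_sum[symmetric] sum_distrib_left sum_negf)
  also have "\<dots> = (\<Prod>i\<in>{..<k}. measure_pmf.expectation (T_pmf r m) (\<lambda>j. exp (- l * real j)))"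
    by (rule expectation_prod_Pi_pmf)
       (auto intro!: integrable_measure_pmf_finite finite_subset[OF set_T])
  finally show ?thesis by simp
qed

lemma set_tau: "s \<in> set_pmf (tau_pmf r m k) \<Longrightarrow> k \<le> s"
proof -
  assume "s \<in> set_pmf (tau_pmf r m k)"
  then obtain T where T: "T \<in> set_pmf (Pi_pmf {..<k} 0 (\<lambda>_. T_pmf r m))" and s: "s = (\<Sum>i<k. T i)"
    unfolding tau_pmf_def by auto
  have "\<forall>i<k. T i \<in> set_pmf (T_pmf r m)"
    using T by (auto simp: set_Pi_pmf PiE_dflt_def)
  then have "\<forall>i<k. 1 \<le> T i" using set_T by fastforce
  then have "(\<Sum>i<k. (1::nat)) \<le> (\<Sum>i<k. T i)" by (intro sum_mono) auto
  then show ?thesis using s by simp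
qed

lemma markov:
  assumes "l \<ge> 0"
  shows "measure_pmf.prob (tau_pmf r m k) {..n}
    \<le> exp (l * real n) * measure_pmf.expectation (tau_pmf r m k) (\<lambda>s. exp (- l * real s))"
proof -
  have "measure_pmf.prob (tau_pmf r m k) {..n} = measure_pmf.expectation (tau_pmf r m k) (indicator {..n})"
    by simp
  also have "\<dots> \<le> measure_pmf.expectation (tau_pmf r m k) (\<lambda>s. exp (l * real n) * exp (- l * real s))"
  proof (rule integral_mono)
    show "integrable (measure_pmf (tau_pmf r m k)) (indicator {..n} :: nat \<Rightarrow> real)"
      by (rule measure_pmf.integrable_const_bound[where B=1]) (auto split: split_indicator)
    show "integrable (measure_pmf (tau_pmf r m k)) (\<lambda>s. exp (l * real n) * exp (- l * real s))"
      by (rule measure_pmf.integrable_const_bound[where B="exp (l * real n)"])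
         (use assms in auto)
    fix s :: nat
    show "indicator {..n} s \<le> exp (l * real n) * exp (- l * real s)"
    proof (cases "s \<le> n")
      case True
      then have "l * real s \<le> l * real n" using assms by (intro mult_left_mono) auto
      then show ?thesis using True by (simp add: mult_exp_exp)
    qed auto
  qed
  finally show ?thesis by simp
qed

lemma exp_T_bound:
  assumes J: "J \<ge> (1::nat)"
  shows "measure_pmf.expectation (T_pmf r m) (\<lambda>j. exp (- (1 / real J) * real j))
     \<le> exp (- (\<Sum>j=Suc J..m. r j) / (2 * R r m))"
proof -
  define S where "S = (\<Sum>j=Suc J..m. r j)"
  have e1: "exp (-1::real) \<le> 1/2"
  proof -
    have "2 \<le> exp (1::real)" using exp_ge_add_one_self[of 1] by simp
    then show ?thesis by (simp add: exp_minus field_simps)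
  qed
  have pt: "exp (- (1 / real J) * real j) * r j \<le> r j - (1/2) * (if J < j then r j else 0)"
    if "j \<in> {1..m}" for j
  proof -
    have rj: "0 < r j" using that r_pos by auto
    show ?thesis
    proof (cases "J < j")
      case True
      then have "- (1 / real J) * real j \<le> -1" using J by (simp add: field_simps)
      then have "exp (- (1 / real J) * real j) \<le> 1/2" using e1 by (meson exp_le_cancel_iff order_trans)
      then show ?thesis using True rj by simp
    next
      case False
      have "exp (- (1 / real J) * real j) \<le> 1" using J by simp
      then show ?thesis using False rj by simp
    qed
  qed
  have "(\<Sum>j=1..m. exp (- (1 / real J) * real j) * r j) \<le> (\<Sum>j=1..m. r j - (1/2) * (if J < j then r j else 0))"
    by (rule sum_mono) (rule pt)
  also have "\<dots> = R r m - (1/2) * (\<Sum>j\<in>{1..m}. (if J < j then r j else 0))"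
    by (simp add: sum_subtractf sum_distrib_left R_def)
  also have "(\<Sum>j\<in>{1..m}. (if J < j then r j else 0)) = S"
  proof -
    have "(\<Sum>j\<in>{1..m}. (if J < j then r j else 0)) = (\<Sum>j\<in>{x\<in>{1..m}. J < x}. r j)"
      by (rule sum.inter_filter[symmetric]) simp
    also have "{x\<in>{1..m}. J < x} = {Suc J..m}" by auto
    finally show ?thesis by (simp add: S_def)
  qed
  finally have "(\<Sum>j=1..m. exp (- (1 / real J) * real j) * r j) / R r m \<le> (R r m - S/2) / R r m"
    using R_pos by (intro divide_right_mono) auto
  also have "\<dots> = 1 + (- S / (2 * R r m))" using R_pos by (simp add: field_simps)
  also have "\<dots> \<le> exp (- S / (2 * R r m))" by (rule exp_ge_add_one_self)
  finally show ?thesis by (simp add: exp_T S_def)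
qed

end

theorem mainTheorem15:
  fixes r :: "nat \<Rightarrow> real" and a :: real
  assumes a_pos: "0 < a"
    and r_pos: "\<And>n. n \<ge> 1 \<Longrightarrow> 0 < r n"
    and r_asymp: "(\<lambda>n. real n * r n) \<longlonglongrightarrow> a"
  shows "\<exists>c::real. 0 < c \<and> c < 1 \<and>
    (\<forall>m n k :: nat. m \<ge> 1 \<longrightarrow> n \<ge> 1 \<longrightarrow> k \<ge> 1 \<longrightarrow>
       measure_pmf.prob (tau_pmf r m k) {..n}
         \<le> (min (real n * (ln (real m) + 1) / (c * real k * real m)) 1)
              powr (c * real k / (ln (real m) + 1)))"
proof -
  have "Bseq (\<lambda>n. real n * r n)" using r_asymp by (intro convergent_imp_Bseq convergentI)
  then obtain A where A: "A > 0" "\<And>j. norm (real j * r j) \<le> A" unfolding Bseq_def by blast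
  have "eventually (\<lambda>j. a/2 < real j * r j) sequentially"
    using order_tendstoD(1)[OF r_asymp, of "a/2"] a_pos by simp
  then obtain N where N: "\<And>j. j \<ge> N \<Longrightarrow> a/2 < real j * r j" unfolding eventually_sequentially by blast
  define B where "B = Min (insert (a/2) ((\<lambda>j. real j * r j) ` {1..N}))"
  have Bpos: "B > 0" unfolding B_def using a_pos r_pos by (auto simp: Min_gr_iff)
  have Ble: "B \<le> real j * r j" if "j \<ge> 1" for j
  proof (cases "j \<ge> N")
    case True
    have "B \<le> a/2" unfolding B_def by (rule Min_le) auto
    then show ?thesis using N[OF True] by simp
  next
    case False
    then show ?thesis unfolding B_def using that by (intro Min_le) auto
  qed
  have rB: "B / real j \<le> r j" if "j \<ge> 1" for j
    using Ble[OF that] that by (simp add: field_simps)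
  have rA: "r j \<le> A / real j" if "j \<ge> 1" for j
    using A(2)[of j] that by (simp add: field_simps abs_le_iff)
  define \<beta> where "\<beta> = B / A"
  have \<beta>pos: "\<beta> > 0" using Bpos A by (simp add: \<beta>_def)
  have "B \<le> A" using Ble[of 1] A(2)[of 1] by simp
  then have \<beta>le: "\<beta> \<le> 1" using A by (simp add: \<beta>_def)
  define c where "c = min (\<beta>/4) (exp (-(4/\<beta>+4)))"
  have cpos: "c > 0" using \<beta>pos by (simp add: c_def)
  have c\<beta>: "c \<le> \<beta>/4" by (simp add: c_def)
  have cexp: "c \<le> exp (-(4/\<beta>+4))" by (simp add: c_def)
  have c1: "c < 1" using c\<beta> \<beta>le by simp
  have ln3: "ln (3::real) \<le> 2"
  proof -
    have "3 \<le> exp (2::real)" using exp_ge_add_one_self[of 2] by simp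
    then show ?thesis by (metis exp_le_cancel_iff exp_ln zero_less_numeral less_le_trans)
  qed
  have main: "measure_pmf.prob (tau_pmf r m k) {..n}
         \<le> (min (real n * (ln (real m) + 1) / (c * real k * real m)) 1)
              powr (c * real k / (ln (real m) + 1))"
    if m1: "m \<ge> 1" and n1: "n \<ge> 1" and k1: "k \<ge> 1" for m n k :: nat
  proof -
    define L where "L = ln (real m) + 1"
    have L1: "L \<ge> 1" using m1 by (simp add: L_def)
    define x where "x = real n * L / (c * real k * real m)"
    have xpos: "x > 0" using cpos m1 n1 k1 L1 by (simp add: x_def)
    show ?thesis
    proof (cases "x \<ge> 1")
      case True
      have eq: "real n * (ln (real m) + 1) / (c * real k * real m) = x" by (simp add: x_def L_def)
      have "min x 1 = 1" using True by simp
      then show ?thesis unfolding eq using measure_pmf.prob_le_1 by simp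
    next
      case False
      then have x1: "x < 1" by simp
      have rhs: "(min (real n * (ln (real m) + 1) / (c * real k * real m)) 1)
              powr (c * real k / (ln (real m) + 1)) = exp (c * real k / L * ln x)"
        using x1 xpos by (simp add: x_def[symmetric] L_def[symmetric] powr_def)
      show ?thesis
      proof (cases "k \<le> n")
        case False
        have "measure_pmf.prob (tau_pmf r m k) {..n} = 0"
          
        proof -
          have "set_pmf (tau_pmf r m k) \<inter> {..n} = {}"
          proof (rule equals0I)
            fix s assume "s \<in> set_pmf (tau_pmf r m k) \<inter> {..n}"
            then have "k \<le> s" "s \<le> n" using set_tau[OF r_pos m1] by auto
            then show False using False by simp
          qed
          then show ?thesis by (simp add: measure_pmf_zero_iff)
        qed
        then show ?thesis by simp
      next
        case True
        define J where "J = nat \<lceil>real n * L / real k\<rceil>"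
        have nLk: "real n * L / real k \<ge> 1"
        proof -
          have "real k \<le> real n" using True by simp
          also have "real n \<le> real n * L" using L1 mult_left_mono[of 1 L "real n"] by simp
          finally have "real k \<le> real n * L" .
          then show ?thesis using k1 by simp
        qed
        have Jge: "real J \<ge> real n * L / real k" unfolding J_def by linarith
        have Jlt: "real J < real n * L / real k + 1" unfolding J_def using nLk by linarith
        have J1: "J \<ge> 1" using Jge nLk by linarith
        define w where "w = real k * real m / (real n * L)"
        have wpos: "w > 0" using m1 n1 k1 L1 by (simp add: w_def)
        have xw: "x = 1 / (c * w)" using cpos L1 m1 n1 k1 by (simp add: x_def w_def field_simps)
        have cw: "c * w > 1" using x1 xw cpos wpos by (simp add: field_simps)
        have lnw: "ln w \<ge> 4/\<beta> + 4"
        proof -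
          have "exp (4/\<beta>+4) * c \<le> exp (4/\<beta>+4) * exp (-(4/\<beta>+4))"
            using cexp by (intro mult_left_mono) auto
          also have "\<dots> = 1" by (simp only: exp_add[symmetric]) simp
          finally have "exp (4/\<beta>+4) * c \<le> 1" .
          have "exp (4/\<beta>+4) \<le> exp (4/\<beta>+4) * (c * w)"
            using cw mult_left_mono[of 1 "c*w" "exp (4/\<beta>+4)"] by simp
          also have "\<dots> = (exp (4/\<beta>+4) * c) * w" by simp
          also have "\<dots> \<le> 1 * w" using \<open>exp (4/\<beta>+4) * c \<le> 1\<close> wpos by (intro mult_right_mono) auto
          finally have "exp (4/\<beta>+4) \<le> w" by simp
          then show ?thesis using wpos by (metis exp_le_cancel_iff exp_ln)
        qed
        define ell where "ell = ln ((real m + 1) / (real J + 1))"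
        have aux3: "\<And>(j::real) y. j < y + 1 \<Longrightarrow> 1 \<le> y \<Longrightarrow> j + 1 \<le> 3*y" by linarith
        have J3: "real J + 1 \<le> 3 * (real n * L / real k)" by (rule aux3[OF Jlt nLk])
        have pos3: "0 < 3 * (real n * L / real k) * (real J + 1)"
          using nLk by (intro mult_pos_pos) auto
        have wJ: "w / 3 \<le> (real m + 1) / (real J + 1)"
        proof -
          have "w / 3 = real m / (3 * (real n * L / real k))" using k1 by (simp add: w_def field_simps)
          also have "real m / (3 * (real n * L / real k)) \<le> real m / (real J + 1)"
            using J3 pos3 by (intro divide_left_mono) auto
          also have "\<dots> \<le> (real m + 1) / (real J + 1)" by (intro divide_right_mono) auto
          finally show ?thesis .
        qed
        have ellge: "ell \<ge> ln w - ln 3"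
        proof -
          have "ln (w/3) \<le> ell" unfolding ell_def using wJ wpos by simp
          then show ?thesis using wpos by (simp add: ln_div)
        qed
        have "4/\<beta> > 0" using \<beta>pos by simp
        then have ellpos: "ell \<ge> 0" using ellge lnw ln3 by linarith
        define S where "S = (\<Sum>j=Suc J..m. r j)"
        have Sge: "S \<ge> B * ell"
        proof -
          have "B * ell \<le> B * (\<Sum>j=Suc J..m. 1 / real j)"
            unfolding ell_def using Bpos by (intro mult_left_mono harm_low) auto
          also have "\<dots> = (\<Sum>j=Suc J..m. B / real j)" by (simp add: sum_distrib_left)
          also have "\<dots> \<le> S" unfolding S_def by (intro sum_mono rB) auto
          finally show ?thesis .
        qed
        have Rle: "R r m \<le> A * L"
        proof -
          have "R r m \<le> (\<Sum>j=1..m. A / real j)" unfolding R_def by (intro sum_mono rA) auto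
          also have "\<dots> = A * (\<Sum>j=1..m. 1 / real j)" by (simp add: sum_distrib_left)
          also have "\<dots> \<le> A * L" unfolding L_def using A m1 by (intro mult_left_mono harm_up) auto
          finally show ?thesis .
        qed
        have Rpos: "R r m > 0" by (rule R_pos[OF r_pos m1])
        have SR: "S / (2 * R r m) \<ge> \<beta> * ell / (2 * L)"
        proof -
          have "\<beta> * ell / (2 * L) = B * ell / (2 * (A * L))" using A by (simp add: \<beta>_def)
          also have "\<dots> \<le> B * ell / (2 * R r m)"
            using Rle Rpos Bpos A(1) L1 ellpos by (intro divide_left_mono mult_left_mono) auto
          also have "\<dots> \<le> S / (2 * R r m)" using Sge Rpos by (intro divide_right_mono) auto
          finally show ?thesis .
        qed
        have "measure_pmf.prob (tau_pmf r m k) {..n}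
           \<le> exp ((1 / real J) * real n) * (measure_pmf.expectation (T_pmf r m) (\<lambda>j. exp (- (1 / real J) * real j))) ^ k"
          using markov[OF r_pos m1, where l="1 / real J" and k=k and n=n] exp_tau[OF r_pos m1, where k=k and l="1 / real J"] by simp
        also have "\<dots> \<le> exp ((1 / real J) * real n) * (exp (- S / (2 * R r m))) ^ k"
          using exp_T_bound[OF r_pos m1 J1]
          by (intro mult_left_mono power_mono) (auto simp: S_def intro!: integral_nonneg_AE)
        also have "\<dots> = exp (real n / real J - real k * (S / (2 * R r m)))"
          by (simp add: exp_of_nat_mult[symmetric] exp_add[symmetric] exp_diff)
        also have "\<dots> \<le> exp (c * real k / L * ln x)"
        proof (subst exp_le_cancel_iff)
          have nJ: "real n / real J \<le> real k / L"
            using Jge J1 L1 k1 by (simp add: field_simps)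
          have lnx: "ln x = - ln c - ln w" using xw cpos wpos by (simp add: ln_div ln_mult)
          have lnc: "ln c \<le> 0" using cpos c1 by simp
          have key: "1 - \<beta> * ell / 2 + c * ln c + c * ln w \<le> 0"
          proof -
            have "c * ln c \<le> 0" using cpos lnc by (simp add: mult_nonneg_nonpos)
            moreover have "\<beta> * ell \<ge> \<beta> * (ln w - ln 3)" using ellge \<beta>pos by simp
            moreover have "(\<beta>/2 - c) * ln w \<ge> (\<beta>/4) * (4/\<beta> + 4)"
              using c\<beta> lnw \<beta>pos by (intro mult_mono) auto
            moreover have "(\<beta>/4) * (4/\<beta> + 4) = 1 + \<beta>" using \<beta>pos by (simp add: field_simps)
            moreover have "\<beta> * ln 3 \<le> 2 * \<beta>" using ln3 \<beta>pos by simp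
            ultimately show ?thesis by (simp add: algebra_simps)
          qed
          have "real n / real J - real k * (S / (2 * R r m)) \<le> real k / L - real k * (\<beta> * ell / (2 * L))"
            using nJ mult_left_mono[OF SR, of "real k"] by simp
          also have "\<dots> = (real k / L) * (1 - \<beta> * ell / 2)" using L1 by (simp add: field_simps)
          also have "\<dots> \<le> (real k / L) * (- c * ln c - c * ln w)"
            using key L1 by (intro mult_left_mono) auto
          also have "\<dots> = c * real k / L * ln x" unfolding lnx by (simp add: field_simps)
          finally show "real n / real J - real k * (S / (2 * R r m)) \<le> c * real k / L * ln x" .
        qed
        finally show ?thesis using rhs by simp
      qed
    qed
  qed
  show ?thesis using cpos c1 main by blast
qed

end
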